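(* Let $K$ be a finite field with $q$ elements and let $\Psi(x)\in K[x]$ be a polynomial of degree $\deg\Psi\geqslant 1$. Then there exists an irreducible polynomial in $K[x]$ that is coprime to $\Psi$ and has degree $\leqslant \log_q(\deg\Psi)+1$.
   Context: $\log_q$ denotes the logarithm to base $q$. *)

theory Defs
  imports "HOL-Computational_Algebra.Computational_Algebra" "HOL-Library.Cardinality"
begin

end

theory Submission imports Defs begin


context
begin

interpretation fp:
  normalization_euclidean_semiring_multiplicative where zero = "0 :: 'a :: field poly"
    and one = 1 and plus = plus and minus = minus
    and times = times
    and normalize = "\<lambda>p. smult (inverse (lead_coeff p)) p"
    and unit_factor = "\<lambda>p. [:lead_coeff p:]"
    and euclidean_size = "\<lambda>p. if p = 0 then 0 else 2 ^ degree p"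
    and divide = divide and modulo = modulo
  rewrites "dvd.dvd (times :: 'a poly \<Rightarrow> _) = Rings.dvd"
    and "comm_monoid_mult.prod_mset times 1 = prod_mset"
    and "comm_semiring_1.irreducible times 1 0 = irreducible"
    and "comm_semiring_1.prime_elem times 1 0 = prime_elem"
    and "comm_monoid_mult.prod times 1 = prod"
    and "power.power 1 times = power"
proof -
  show "comm_monoid_mult.prod times 1 = prod"
    by (simp add: prod_dict)
  show "power.power 1 times = power"
    by (simp add: power_dict)
  show "dvd.dvd (times :: 'a poly \<Rightarrow> _) = Rings.dvd"
    by (simp add: dvd_dict)
  show "comm_monoid_mult.prod_mset times 1 = prod_mset"
    by (simp add: prod_mset_dict)
  show "comm_semiring_1.irreducible times 1 0 = irreducible"
    by (simp add: irreducible_dict)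
  show "comm_semiring_1.prime_elem times 1 0 = prime_elem"
    by (simp add: prime_elem_dict)
  show "class.normalization_euclidean_semiring_multiplicative divide plus minus (0 :: 'a poly) times 1
    modulo (\<lambda>p. if p = 0 then 0 else 2 ^ degree p)
    (\<lambda>p. [:lead_coeff p:]) (\<lambda>p. smult (inverse (lead_coeff p)) p)"
  proof (standard, fold dvd_dict)
    fix p :: "'a poly"
    show "[:lead_coeff p:] * smult (inverse (lead_coeff p)) p = p"
      by (cases "p = 0") simp_all
  next
    fix p :: "'a poly" assume "is_unit p"
    then show "[:lead_coeff p:] = p"
      by (elim is_unit_polyE) (auto simp: monom_0 one_poly_def field_simps)
  next
    fix p :: "'a poly" assume "p \<noteq> 0"
    then show "is_unit [:lead_coeff p:]"
      by (simp add: is_unit_pCons_iff)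
  next
    fix a b :: "'a poly" assume "is_unit a"
    thus "[:lead_coeff (a * b):] = a * [:lead_coeff b:]"
      by (auto elim!: is_unit_polyE)
  qed (auto simp: lead_coeff_mult Rings.div_mult_mod_eq intro!: degree_mod_less' degree_mult_right_le)
qed


lemma prime_monic:
  fixes p :: "'a::field poly"
  assumes "fp.prime p" shows "lead_coeff p = 1"
proof -
  have p0: "p \<noteq> 0" and n: "smult (inverse (lead_coeff p)) p = p"
    using assms by (auto simp: fp.prime_def)
  have "lead_coeff p = lead_coeff (smult (inverse (lead_coeff p)) p)" using n by simp
  also have "\<dots> = 1" using p0 by simp
  finally show ?thesis .
qed

lemma prime_deg_pos:
  fixes p :: "'a::field poly"
  assumes "fp.prime p" shows "degree p > 0"
proof -
  have "prime_elem p" using assms by (simp add: fp.prime_def)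
  then have "p \<noteq> 0" "\<not> is_unit p" by auto
  then show ?thesis using is_unit_iff_degree by auto
qed

definition MM :: "nat \<Rightarrow> 'a::{zero,one} poly set" where
  "MM m = {f. lead_coeff f = 1 \<and> degree f = m}"

lemma MM_card:
  "finite (MM m :: 'a::{field,finite} poly set) \<and> card (MM m :: 'a poly set) = CARD('a)^m"
proof (induction m)
  case 0
  have "MM 0 = {1::'a poly}"
    unfolding MM_def by (auto elim: degree_eq_zeroE)
  then show ?case by simp
next
  case (Suc m)
  have eq: "MM (Suc m) = (\<lambda>(a,g). pCons a g) ` (UNIV \<times> (MM m :: 'a poly set))"
  proof (intro equalityI subsetI)
    fix f :: "'a poly" assume "f \<in> MM (Suc m)"
    then have f: "lead_coeff f = 1" "degree f = Suc m" by (auto simp: MM_def)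
    obtain a g where fg: "f = pCons a g" by (cases f)
    have "g \<noteq> 0" using f fg by auto
    then have "g \<in> MM m" using f fg by (auto simp: MM_def)
    then show "f \<in> (\<lambda>(a,g). pCons a g) ` (UNIV \<times> MM m)" using fg by auto
  next
    fix f :: "'a poly" assume "f \<in> (\<lambda>(a,g). pCons a g) ` (UNIV \<times> MM m)"
    then obtain a g where fg: "f = pCons a g" "g \<in> MM m" by auto
    then have "g \<noteq> 0" by (auto simp: MM_def)
    then show "f \<in> MM (Suc m)" using fg by (auto simp: MM_def)
  qed
  have inj: "inj_on (\<lambda>(a,g). pCons a g) (UNIV \<times> (MM m :: 'a poly set))"
    by (auto simp: inj_on_def)
  show ?case using Suc eq card_image[OF inj] by (simp add: card_cartesian_product)
qed

lemma deg_pf: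
  fixes f :: "'a::field poly"
  assumes "f \<noteq> 0"
  shows "degree f = (\<Sum>p\<in>fp.prime_factors f. fp.multiplicity p f * degree p)"
proof -
  have "degree f = degree (smult (inverse (lead_coeff f)) f)" using assms by simp
  also have "smult (inverse (lead_coeff f)) f = (\<Prod>p\<in>fp.prime_factors f. p ^ fp.multiplicity p f)"
    by (rule fp.prod_prime_factors[OF assms, symmetric])
  also have "degree \<dots> = (\<Sum>p\<in>fp.prime_factors f. degree (p ^ fp.multiplicity p f))"
    by (rule degree_prod_sum_eq) (auto simp: fp.in_prime_factors_iff)
  also have "\<dots> = (\<Sum>p\<in>fp.prime_factors f. fp.multiplicity p f * degree p)"
    by (rule sum.cong) (auto simp: degree_power_eq fp.in_prime_factors_iff)
  finally show ?thesis .
qed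


lemma prime_facts:
  fixes p :: "'a::field poly"
  assumes "fp.prime p" shows "p \<noteq> 0" "\<not> is_unit p" "prime_elem p"
  using assms by (auto simp: fp.prime_def prime_elem_def)

lemma prime_irred:
  fixes p :: "'a::field poly"
  assumes "fp.prime p" shows "irreducible p"
  using assms by (simp add: fp.prime_def prime_elem_imp_irreducible)

lemma finite_primes_le:
  "finite {p :: 'a::{field,finite} poly. fp.prime p \<and> degree p \<le> m}"
proof (rule finite_subset)
  show "{p :: 'a poly. fp.prime p \<and> degree p \<le> m} \<subseteq> (\<Union>j\<le>m. MM j)"
    using prime_monic by (auto simp: MM_def)
  show "finite (\<Union>j\<le>m. MM j :: 'a poly set)" using MM_card by auto
qed

lemma finite_pairs:
  "finite {(p :: 'a::{field,finite} poly, e). fp.prime p \<and> 1 \<le> e \<and> e * degree p \<le> m}"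
proof (rule finite_subset)
  show "{(p :: 'a poly, e). fp.prime p \<and> 1 \<le> e \<and> e * degree p \<le> m}
     \<subseteq> {p. fp.prime p \<and> degree p \<le> m} \<times> {1..m}"
  proof (rule subsetI)
    fix x assume "x \<in> {(p :: 'a poly, e). fp.prime p \<and> 1 \<le> e \<and> e * degree p \<le> m}"
    then obtain p e where x: "x = (p, e)" and h: "fp.prime p" "1 \<le> e" "e * degree p \<le> m" by auto
    have "degree p \<le> e * degree p" using h(2) by simp
    then have "degree p \<le> m" using h by linarith
    moreover have "e * 1 \<le> e * degree p" using prime_deg_pos[OF h(1)] by (intro mult_le_mono2) simp
    then have "e \<le> m" using h by linarith
    ultimately show "x \<in> {p. fp.prime p \<and> degree p \<le> m} \<times> {1..m}" using h x by auto
  qed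
  show "finite ({p :: 'a poly. fp.prime p \<and> degree p \<le> m} \<times> {1..m})"
    using finite_primes_le by auto
qed

lemma pair_set_eq:
  fixes f :: "'a::field poly"
  assumes "f \<noteq> 0"
  shows "{(p, e). fp.prime p \<and> 1 \<le> e \<and> e * degree p \<le> degree f \<and> p ^ e dvd f}
       = Sigma (fp.prime_factors f) (\<lambda>p. {1..fp.multiplicity p f})"
proof safe
  fix p :: "'a poly" and e
  assume h: "fp.prime p" "1 \<le> e" "p ^ e dvd f"
  have nu: "\<not> is_unit p" using prime_facts[OF h(1)] by simp
  have "p dvd p ^ e" using h(2) by (simp add: dvd_power)
  then have "p dvd f" using h(3) by (rule dvd_trans)
  then show "p \<in> fp.prime_factors f" using h assms by (simp add: fp.in_prime_factors_iff)
  show "e \<in> {1..fp.multiplicity p f}"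
    using h fp.power_dvd_iff_le_multiplicity[OF assms nu] by auto
next
  fix p :: "'a poly" and e
  assume h: "p \<in> fp.prime_factors f" "e \<in> {1..fp.multiplicity p f}"
  then show pr: "fp.prime p" by (simp add: fp.in_prime_factors_iff)
  show "1 \<le> e" using h by auto
  have nu: "\<not> is_unit p" using prime_facts[OF pr] by simp
  show dv: "p ^ e dvd f" using h fp.power_dvd_iff_le_multiplicity[OF assms nu] by auto
  have "p \<noteq> 0" using prime_facts[OF pr] by simp
  then have "degree (p ^ e) = e * degree p" by (simp add: degree_power_eq)
  then show "e * degree p \<le> degree f" using dvd_imp_degree_le[OF dv assms] by simp
qed

lemma deg_pairs:
  fixes f :: "'a::field poly"
  assumes "f \<noteq> 0"
  shows "degree f = (\<Sum>x\<in>{(p, e). fp.prime p \<and> 1 \<le> e \<and> e * degree p \<le> degree f \<and> p ^ e dvd f}. degree (fst x))"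
proof -
  have "(\<Sum>x\<in>{(p, e). fp.prime p \<and> 1 \<le> e \<and> e * degree p \<le> degree f \<and> p ^ e dvd f}. degree (fst x))
     = (\<Sum>x\<in>Sigma (fp.prime_factors f) (\<lambda>p. {1..fp.multiplicity p f}). degree (fst x))"
    using pair_set_eq[OF assms] by simp
  also have "\<dots> = (\<Sum>p\<in>fp.prime_factors f. \<Sum>e\<in>{1..fp.multiplicity p f}. degree p)"
    by (subst sum.Sigma) (auto simp: split_beta)
  also have "\<dots> = (\<Sum>p\<in>fp.prime_factors f. fp.multiplicity p f * degree p)" by simp
  finally show ?thesis using deg_pf[OF assms] by simp
qed

lemma card_dvd:
  fixes p :: "'a::{field,finite} poly"
  assumes "fp.prime p" "e * degree p \<le> m"
  shows "card {f \<in> MM m. p ^ e dvd f} = CARD('a) ^ (m - e * degree p)"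
proof -
  have p0: "p \<noteq> 0" using prime_facts[OF assms(1)] by simp
  have lp: "lead_coeff p = 1" by (rule prime_monic[OF assms(1)])
  have dpe: "degree (p ^ e) = e * degree p" using p0 by (simp add: degree_power_eq)
  have pe0: "p ^ e \<noteq> 0" using p0 by simp
  have lpe: "lead_coeff (p ^ e) = 1" using lp by (simp add: lead_coeff_power)
  have eq: "{f \<in> MM m. p ^ e dvd f} = (\<lambda>g. p ^ e * g) ` MM (m - e * degree p)"
  proof (intro equalityI subsetI)
    fix f assume "f \<in> {f \<in> MM m. p ^ e dvd f}"
    then have f: "lead_coeff f = 1" "degree f = m" "p ^ e dvd f" by (auto simp: MM_def)
    then obtain g where g: "f = p ^ e * g" by (auto elim: dvdE)
    have g0: "g \<noteq> 0" using f g by auto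
    have "degree f = e * degree p + degree g" using g g0 pe0 dpe by (simp add: degree_mult_eq)
    moreover have "lead_coeff g = 1" using f(1) g lpe by (simp add: lead_coeff_mult)
    ultimately have "g \<in> MM (m - e * degree p)" using f by (auto simp: MM_def)
    then show "f \<in> (\<lambda>g. p ^ e * g) ` MM (m - e * degree p)" using g by auto
  next
    fix f assume "f \<in> (\<lambda>g. p ^ e * g) ` MM (m - e * degree p)"
    then obtain g where g: "f = p ^ e * g" "g \<in> MM (m - e * degree p)" by auto
    then have g0: "g \<noteq> 0" and lg: "lead_coeff g = 1" and dg: "degree g = m - e * degree p"
      by (auto simp: MM_def)
    have "degree f = e * degree p + degree g" using g g0 pe0 dpe by (simp add: degree_mult_eq)
    then have "degree f = m" using dg assms(2) by simp
    moreover have "lead_coeff f = 1" using g lg lpe by (simp add: lead_coeff_mult)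
    ultimately show "f \<in> {f \<in> MM m. p ^ e dvd f}" using g by (auto simp: MM_def)
  qed
  have inj: "inj_on (\<lambda>g. p ^ e * g) (MM (m - e * degree p))"
    using pe0 by (auto simp: inj_on_def)
  show ?thesis using eq card_image[OF inj] MM_card[where 'a='a] by simp
qed


lemma main_id:
  "m * CARD('a::{field,finite})^m = (\<Sum>x\<in>{(p :: 'a poly, e). fp.prime p \<and> 1 \<le> e \<and> e * degree p \<le> m}.
      degree (fst x) * CARD('a) ^ (m - snd x * degree (fst x)))"
proof -
  let ?q = "CARD('a)"
  let ?P = "{(p :: 'a poly, e). fp.prime p \<and> 1 \<le> e \<and> e * degree p \<le> m}"
  have fin: "finite ?P" by (rule finite_pairs)
  have finM: "finite (MM m :: 'a poly set)" and cM: "card (MM m :: 'a poly set) = ?q ^ m"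
    using MM_card[where 'a='a] by blast+
  have "m * ?q^m = (\<Sum>f\<in>(MM m :: 'a poly set). m)" using cM by simp
  also have "\<dots> = (\<Sum>f\<in>(MM m :: 'a poly set). degree f)"
    by (rule sum.cong) (auto simp: MM_def)
  also have "\<dots> = (\<Sum>f\<in>MM m. \<Sum>x\<in>?P. if fst x ^ snd x dvd f then degree (fst x) else 0)"
  proof (rule sum.cong[OF refl])
    fix f :: "'a poly" assume f: "f \<in> MM m"
    then have f0: "f \<noteq> 0" and df: "degree f = m" by (auto simp: MM_def)
    have "(\<Sum>x\<in>?P. if fst x ^ snd x dvd f then degree (fst x) else 0)
        = (\<Sum>x\<in>{x\<in>?P. fst x ^ snd x dvd f}. degree (fst x))"
      by (rule sum.inter_filter[OF fin, symmetric])
    also have "{x\<in>?P. fst x ^ snd x dvd f}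
        = {(p, e). fp.prime p \<and> 1 \<le> e \<and> e * degree p \<le> degree f \<and> p ^ e dvd f}"
      using df by auto
    finally show "degree f = (\<Sum>x\<in>?P. if fst x ^ snd x dvd f then degree (fst x) else 0)"
      using deg_pairs[OF f0] by simp
  qed
  also have "\<dots> = (\<Sum>x\<in>?P. \<Sum>f\<in>MM m. if fst x ^ snd x dvd f then degree (fst x) else 0)"
    by (rule sum.swap)
  also have "\<dots> = (\<Sum>x\<in>?P. degree (fst x) * ?q ^ (m - snd x * degree (fst x)))"
  proof (rule sum.cong[OF refl])
    fix x assume "x \<in> ?P"
    then have x2: "fp.prime (fst x)" and x3: "snd x * degree (fst x) \<le> m" by auto
    have "(\<Sum>f\<in>MM m. if fst x ^ snd x dvd f then degree (fst x) else 0)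
        = (\<Sum>f\<in>{f\<in>MM m. fst x ^ snd x dvd f}. degree (fst x))"
      by (rule sum.inter_filter[OF finM, symmetric])
    also have "\<dots> = degree (fst x) * card {f\<in>MM m. fst x ^ snd x dvd f}" by simp
    also have "\<dots> = degree (fst x) * ?q ^ (m - snd x * degree (fst x))" using card_dvd[OF x2 x3] by simp
    finally show "(\<Sum>f\<in>MM m. if fst x ^ snd x dvd f then degree (fst x) else 0)
       = degree (fst x) * ?q ^ (m - snd x * degree (fst x))" .
  qed
  finally show ?thesis .
qed

lemma D_eq:
  "(\<Sum>x\<in>{(p :: 'a::{field,finite} poly, e). fp.prime p \<and> 1 \<le> e \<and> e * degree p = Suc m}. degree (fst x))
     = CARD('a) ^ Suc m"
proof -
  let ?q = "CARD('a)"
  let ?Pm = "{(p :: 'a poly, e). fp.prime p \<and> 1 \<le> e \<and> e * degree p \<le> m}"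
  let ?PS = "{(p :: 'a poly, e). fp.prime p \<and> 1 \<le> e \<and> e * degree p \<le> Suc m}"
  let ?E = "{(p :: 'a poly, e). fp.prime p \<and> 1 \<le> e \<and> e * degree p = Suc m}"
  have split: "?PS = ?Pm \<union> ?E" by auto
  have disj: "?Pm \<inter> ?E = {}" by auto
  have finPm: "finite ?Pm" by (rule finite_pairs)
  have finE: "finite ?E" by (rule finite_subset[OF _ finite_pairs[of "Suc m"]]) auto
  have "Suc m * ?q ^ Suc m = (\<Sum>x\<in>?PS. degree (fst x) * ?q ^ (Suc m - snd x * degree (fst x)))"
    by (rule main_id)
  also have "\<dots> = (\<Sum>x\<in>?Pm. degree (fst x) * ?q ^ (Suc m - snd x * degree (fst x)))
     + (\<Sum>x\<in>?E. degree (fst x) * ?q ^ (Suc m - snd x * degree (fst x)))"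
    unfolding split by (rule sum.union_disjoint[OF finPm finE disj])
  also have "(\<Sum>x\<in>?Pm. degree (fst x) * ?q ^ (Suc m - snd x * degree (fst x)))
     = ?q * (\<Sum>x\<in>?Pm. degree (fst x) * ?q ^ (m - snd x * degree (fst x)))"
    unfolding sum_distrib_left by (rule sum.cong) (auto simp: Suc_diff_le)
  also have "(\<Sum>x\<in>?Pm. degree (fst x) * ?q ^ (m - snd x * degree (fst x))) = m * ?q ^ m"
    by (rule main_id[symmetric])
  also have "(\<Sum>x\<in>?E. degree (fst x) * ?q ^ (Suc m - snd x * degree (fst x))) = (\<Sum>x\<in>?E. degree (fst x))"
    by (rule sum.cong) auto
  finally show ?thesis by (simp add: algebra_simps)
qed

lemma key:
  fixes Psi :: "'a::{field,finite} poly"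
  assumes "Psi \<noteq> 0" "degree Psi < CARD('a) ^ k" "k \<ge> 1"
  shows "\<exists>p. irreducible p \<and> \<not> p dvd Psi \<and> degree p \<le> k"
proof (rule ccontr)
  assume no: "\<not> ?thesis"
  have sub: "{p. fp.prime p \<and> degree p \<le> k} \<subseteq> fp.prime_factors Psi"
  proof
    fix p :: "'a poly" assume "p \<in> {p. fp.prime p \<and> degree p \<le> k}"
    then have h: "fp.prime p" "degree p \<le> k" by auto
    then have "p dvd Psi" using no prime_irred by blast
    then show "p \<in> fp.prime_factors Psi" using h assms(1) by (simp add: fp.in_prime_factors_iff)
  qed
  obtain m where k: "k = Suc m" using assms(3) by (cases k) auto
  let ?E = "{(p :: 'a poly, e). fp.prime p \<and> 1 \<le> e \<and> e * degree p = k}"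
  have inj: "inj_on fst ?E"
  proof (rule inj_onI)
    fix x y assume "x \<in> ?E" "y \<in> ?E" "fst x = fst y"
    then obtain p e e' where xy: "x = (p,e)" "y = (p,e')" "fp.prime p" "e * degree p = k" "e' * degree p = k"
      by auto
    have "degree p > 0" by (rule prime_deg_pos[OF xy(3)])
    then have "e = e'" using xy(4,5) mult_right_cancel[of "degree p" e e'] by simp
    then show "x = y" using xy by simp
  qed
  have "CARD('a)^k = (\<Sum>x\<in>?E. degree (fst x))" using D_eq[of m, where 'a='a] k by simp
  also have "\<dots> = (\<Sum>p\<in>fst ` ?E. degree p)"
    using sum.reindex[OF inj, of degree] by (simp add: o_def)
  also have "\<dots> \<le> (\<Sum>p\<in>{p :: 'a poly. fp.prime p \<and> degree p \<le> k}. degree p)"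
  proof (rule sum_mono2)
    show "finite {p :: 'a poly. fp.prime p \<and> degree p \<le> k}" by (rule finite_primes_le)
    show "fst ` ?E \<subseteq> {p. fp.prime p \<and> degree p \<le> k}"
    proof
      fix p assume "p \<in> fst ` ?E"
      then obtain e where h: "fp.prime p" "1 \<le> e" "e * degree p = k" by auto
      have "degree p \<le> e * degree p" using h(2) by simp
      then show "p \<in> {p. fp.prime p \<and> degree p \<le> k}" using h by simp
    qed
  qed auto
  also have "\<dots> \<le> (\<Sum>p\<in>fp.prime_factors Psi. degree p)"
    by (rule sum_mono2[OF _ sub]) auto
  also have "\<dots> \<le> (\<Sum>p\<in>fp.prime_factors Psi. fp.multiplicity p Psi * degree p)"
  proof (rule sum_mono)
    fix p assume p: "p \<in> fp.prime_factors Psi"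
    then have pr: "fp.prime p" "p dvd Psi" by (auto simp: fp.in_prime_factors_iff)
    have "1 \<le> fp.multiplicity p Psi"
      using fp.power_dvd_iff_le_multiplicity[OF assms(1) prime_facts(2)[OF pr(1)], of 1] pr(2) by simp
    then show "degree p \<le> fp.multiplicity p Psi * degree p" by simp
  qed
  also have "\<dots> = degree Psi" using deg_pf[OF assms(1)] by simp
  finally show False using assms(2) by simp
qed

end

lemma irred_not_dvd_coprime:
  fixes p :: "'a::field poly"
  assumes "irreducible p" "\<not> p dvd Psi"
  shows "coprime p Psi"
proof (rule coprimeI)
  fix c assume c: "c dvd p" "c dvd Psi"
  show "is_unit c"
  proof (rule ccontr)
    assume "\<not> is_unit c"
    then have "p dvd c" using irreducibleD'[OF assms(1) c(1)] by auto
    then show False using c(2) assms(2) dvd_trans by blast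
  qed
qed

theorem lemma2:
  fixes Psi :: "'a::{field,finite} poly"
  assumes "degree Psi \<ge> 1"
  shows "\<exists>P :: 'a poly. irreducible P \<and> coprime P Psi \<and>
           real (degree P) \<le> log (real CARD('a)) (real (degree Psi)) + 1"
proof -
  let ?q = "CARD('a)"
  let ?d = "degree Psi"
  have "card {0::'a, 1} = 2" by simp
  then have q2: "?q \<ge> 2" using card_mono[of UNIV "{0::'a,1}"] by simp
  have ex: "?d < ?q ^ ?d"
  proof -
    have "?d < 2 ^ ?d" by (rule less_exp)
    also have "\<dots> \<le> ?q ^ ?d" using q2 by (rule power_mono) simp
    finally show ?thesis .
  qed
  define k where "k = (LEAST n. ?d < ?q ^ n)"
  have dk: "?d < ?q ^ k" unfolding k_def by (rule LeastI[of _ ?d], rule ex)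
  have k1: "k \<ge> 1"
  proof (rule ccontr)
    assume "\<not> k \<ge> 1" then have "k = 0" by simp
    then show False using dk assms by simp
  qed
  have dk1: "?q ^ (k - 1) \<le> ?d"
  proof -
    have "\<not> ?d < ?q ^ (k - 1)" unfolding k_def by (rule not_less_Least) (use k1 in \<open>simp add: k_def\<close>)
    then show ?thesis by simp
  qed
  have Psi0: "Psi \<noteq> 0" using assms by auto
  obtain p :: "'a poly" where p: "irreducible p" "\<not> p dvd Psi" "degree p \<le> k"
    using key[OF Psi0 dk k1] by blast
  have "real (k - 1) \<le> log (real ?q) (real ?d)"
    using dk1 q2 by (intro le_log_of_power) (simp_all add: of_nat_power[symmetric] del: of_nat_power)
  then have "real k \<le> log (real ?q) (real ?d) + 1" using k1 by simp
  then have "real (degree p) \<le> log (real ?q) (real ?d) + 1" using p(3)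
    by (meson of_nat_le_iff order_trans)
  then show ?thesis using p irred_not_dvd_coprime by blast
qed

end
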